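(* Let $F_{\mathcal P}$ be a function determined by Algorithm 1 for a path $\mathcal P$. Then for every configuration $\vec i$ on $\mathrm{Conn}(\mathcal P)$ and every plaquette $p\in\mathcal B_{\mathcal P}$, $F_{\mathcal P}(\vec i\oplus\vec\alpha^p)=\frac{b_p(\vec i\oplus\vec\alpha^{\mathcal P})}{b_p(\vec i)}F_{\mathcal P}(\vec i)$; equivalently $S^+_{\mathcal P}=X_{\mathcal P}\sum_{\vec i}F_{\mathcal P}(\vec i)|\vec i\rangle\langle\vec i|$ commutes with every $B_p$.
   Context: Let $\Lambda$ be a hexagonal (honeycomb) lattice embedded in a closed orientable surface, with one qubit on each edge. For an edge $j$, $\sigma^x_j,\sigma^z_j$ denote the Pauli operators on qubit $j$ and $n^{\pm}_j=\tfrac12(1\pm\sigma^z_j)$. A (string) configuration $\vec i$ is a computational basis state, viewed as a bit string assigning $0$ (empty) or $1$ (occupied) to each edge; $\vec i\oplus\vec\alpha$ is bitwise addition mod 2. For a hexagonal plaquette $p$, label its boundary edges $1,\dots,6$ cyclically (index $0$ means $6$) and its outgoing edges so that edge $12$ meets edges $6,1$; edge $7$ meets $1,2$; edge $8$ meets $2,3$; edge $9$ meets $3,4$; edge $10$ meets $4,5$; edge $11$ meets $5,6$. Define $B_p=\Big(\prod_{j=1}^6\sigma^x_j\Big)\Big(\prod_{j=1}^6(-1)^{n^-_{j-1}n^+_j}\Big)\,i^{n^-_{12}(n^-_1n^-_6-n^+_1n^+_6)}\,i^{n^-_7(n^+_1n^+_2-n^-_1n^-_2)}\,i^{n^+_8(n^-_2n^+_3-n^+_2n^-_3)}\,i^{n^-_9(n^-_3n^-_4-n^+_3n^+_4)}\,i^{n^-_{10}(n^+_4n^+_5-n^-_4n^-_5)}\,i^{n^+_{11}(n^-_5n^+_6-n^+_5n^-_6)}$;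 all $B_p$ commute pairwise and square to the identity. Write $B_p=\prod_{j\in\partial p}\sigma^x_j\sum_{\vec i}b_p(\vec i)|\vec i\rangle\langle\vec i|$, defining the phase $b_p(\vec i)$. Let $\vec\alpha^p$ be the configuration occupied exactly on the boundary edges of $p$. A path $\mathcal P$ is a sequence of edges forming a walk; $\vec\alpha^{\mathcal P}$ is the mod-2 sum of the indicators of its edges and $X_{\mathcal P}$ the product of $\sigma^x$ over its edges. $\mathrm{Conn}(\mathcal P)$ is the set of edges of $\mathcal P$ together with all edges sharing a vertex with an edge of $\mathcal P$; $\mathcal B_{\mathcal P}$ is the set of plaquettes with at least one boundary edge in $\mathrm{Conn}(\mathcal P)$. Define $\theta_{\mathcal P}(\vec i,p_1,\dots,p_m)=\prod_{k=1}^m \frac{b_{p_k}(\vec i\oplus\vec\alpha^{\mathcal P}\oplus\bigoplus_{j<k}\vec\alpha^{p_j})}{b_{p_k}(\vec i\oplus\bigoplus_{j<k}\vec\alpha^{p_j})}$ (a configuration on $\mathrm{Conn}(\mathcal P)$ being extended arbitrarily to the whole lattice). The configuration class of $\vec i$ on $\mathrm{Conn}(\mathcal P)$ is $\mathcal C_{\mathcal P}(\vec i)=\{\vec i\oplus\bigoplus_{p\in S}\vec\alpha^p|_{\mathrm{Conn}(\mathcal P)}:S\subseteq\mathcal B_{\mathcal P}\}$. Algorithm 1: for each configuration class pick a representative $\vec i$, set $F_{\mathcal P}(\vec i)$ to an arbitrary unit complex number, and for every subset $\{p_1,\dots,p_m\}\subseteq\mathcal B_{\mathcal P}$ set $F_{\mathcal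 P}(\vec i\oplus\bigoplus_k\vec\alpha^{p_k})=\theta_{\mathcal P}(\vec i,p_1,\dots,p_m)F_{\mathcal P}(\vec i)$. *)

theory Defs
  imports Complex_Main
begin

text \<open>A configuration is the set of occupied edges. Bitwise addition mod 2
is symmetric difference.\<close>

definition xor_set :: "'e set \<Rightarrow> 'e set \<Rightarrow> 'e set" (infixl "\<oplus>\<^sub>s" 65) where
  "A \<oplus>\<^sub>s B = (A - B) \<union> (B - A)"

text \<open>Occupation numbers: n^- = 1 on an occupied edge, n^+ = 1 on an empty edge
(sigma^z |0> = |0>).\<close>

definition nm :: "'e set \<Rightarrow> 'e \<Rightarrow> int" where
  "nm x e = (if e \<in> x then 1 else 0)"

definition np :: "'e set \<Rightarrow> 'e \<Rightarrow> int" where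
  "np x e = (if e \<in> x then 0 else 1)"

text \<open>ends e = set of the two end vertices of edge e.
 lab p j (j = 1..12) is the labelling of plaquette p: lab p 1..6 are the boundary
 edges in cyclic order, lab p (6+j) is the outgoing edge at the vertex shared by
 boundary edges j and (j mod 6 + 1).\<close>

definition honeycomb :: "('e::finite \<Rightarrow> 'v::finite set) \<Rightarrow> ('p::finite \<Rightarrow> nat \<Rightarrow> 'e) \<Rightarrow> bool" where
  "honeycomb ends lab \<longleftrightarrow>
     (\<forall>e. card (ends e) = 2) \<and>
     (\<forall>v. card {e. v \<in> ends e} = 3) \<and>
     (\<forall>p. inj_on (lab p) {1..6}) \<and>
     (\<forall>p. \<forall>j\<in>{1..6::nat}.
        lab p (6 + j) \<notin> {lab p j, lab p (j mod 6 + 1)} \<and>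
        (\<exists>v. v \<in> ends (lab p j) \<and> v \<in> ends (lab p (j mod 6 + 1)) \<and> v \<in> ends (lab p (6 + j)))) \<and>
     (\<forall>e. card {p. e \<in> lab p ` {1..6}} = 2)"

definition alpha_p :: "('p \<Rightarrow> nat \<Rightarrow> 'e) \<Rightarrow> 'p \<Rightarrow> 'e set" where
  "alpha_p lab p = lab p ` {1..6}"

definition bphase :: "('p \<Rightarrow> nat \<Rightarrow> 'e) \<Rightarrow> 'p \<Rightarrow> 'e set \<Rightarrow> complex" where
  "bphase lab p x =
    (let m = (\<lambda>j. nm x (lab p j)); q = (\<lambda>j. np x (lab p j)) in
     (\<Prod>j\<in>{1..6::nat}. (-1::complex) ^ nat (m (if j = 1 then 6 else j - 1) * q j))
     * \<i> powi (m 12 * (m 1 * m 6 - q 1 * q 6))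
     * \<i> powi (m 7 * (q 1 * q 2 - m 1 * m 2))
     * \<i> powi (q 8 * (m 2 * q 3 - q 2 * m 3))
     * \<i> powi (m 9 * (m 3 * m 4 - q 3 * q 4))
     * \<i> powi (m 10 * (q 4 * q 5 - m 4 * m 5))
     * \<i> powi (q 11 * (m 5 * q 6 - q 5 * m 6)))"

type_synonym 'e op = "'e set \<Rightarrow> 'e set \<Rightarrow> complex"

definition op_mult :: "'e::finite op \<Rightarrow> 'e op \<Rightarrow> 'e op" where
  "op_mult A B = (\<lambda>j i. \<Sum>k\<in>UNIV. A j k * B k i)"

definition op_id :: "'e op" where
  "op_id = (\<lambda>j i. if j = i then 1 else 0)"

text \<open>B_p = (prod sigma^x over boundary) (sum_i b_p(i) |i><i|).\<close>
definition Bop :: "('p \<Rightarrow> nat \<Rightarrow> 'e) \<Rightarrow> 'p \<Rightarrow> 'e op" where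
  "Bop lab p = (\<lambda>j i. if j = i \<oplus>\<^sub>s alpha_p lab p then bphase lab p i else 0)"

definition B_commuting_involutions :: "('p \<Rightarrow> nat \<Rightarrow> 'e::finite) \<Rightarrow> bool" where
  "B_commuting_involutions lab \<longleftrightarrow>
     (\<forall>p q. op_mult (Bop lab p) (Bop lab q) = op_mult (Bop lab q) (Bop lab p)) \<and>
     (\<forall>p. op_mult (Bop lab p) (Bop lab p) = op_id)"

definition is_walk :: "('e \<Rightarrow> 'v set) \<Rightarrow> 'e list \<Rightarrow> bool" where
  "is_walk ends P \<longleftrightarrow>
     (\<exists>vs. length vs = length P + 1 \<and>
        (\<forall>k < length P. ends (P ! k) = {vs ! k, vs ! Suc k}))"

definition alpha_path :: "'e list \<Rightarrow> 'e set" where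
  "alpha_path P = {e. odd (count_list P e)}"

definition Conn :: "('e \<Rightarrow> 'v set) \<Rightarrow> 'e list \<Rightarrow> 'e set" where
  "Conn ends P = set P \<union> {e. \<exists>f\<in>set P. ends e \<inter> ends f \<noteq> {}}"

definition BP :: "('e \<Rightarrow> 'v set) \<Rightarrow> ('p \<Rightarrow> nat \<Rightarrow> 'e) \<Rightarrow> 'e list \<Rightarrow> 'p set" where
  "BP ends lab P = {p. alpha_p lab p \<inter> Conn ends P \<noteq> {}}"

definition alpha_list :: "('p \<Rightarrow> nat \<Rightarrow> 'e) \<Rightarrow> 'p list \<Rightarrow> 'e set" where
  "alpha_list lab ps = foldr (\<lambda>p A. alpha_p lab p \<oplus>\<^sub>s A) ps {}"

definition alpha_set :: "('p::finite \<Rightarrow> nat \<Rightarrow> 'e) \<Rightarrow> 'p set \<Rightarrow> 'e set" where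
  "alpha_set lab S = {e. odd (card {p\<in>S. e \<in> alpha_p lab p})}"

text \<open>theta_P(i, p_1..p_m); a configuration on Conn(P) is extended by zeros.\<close>
definition theta :: "('p \<Rightarrow> nat \<Rightarrow> 'e) \<Rightarrow> 'e list \<Rightarrow> 'e set \<Rightarrow> 'p list \<Rightarrow> complex" where
  "theta lab P x ps =
     (\<Prod>k<length ps.
        bphase lab (ps ! k) (x \<oplus>\<^sub>s alpha_path P \<oplus>\<^sub>s alpha_list lab (take k ps))
        / bphase lab (ps ! k) (x \<oplus>\<^sub>s alpha_list lab (take k ps)))"

definition config_class :: "('e \<Rightarrow> 'v set) \<Rightarrow> ('p::finite \<Rightarrow> nat \<Rightarrow> 'e) \<Rightarrow> 'e list \<Rightarrow> 'e set \<Rightarrow> 'e set set" where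
  "config_class ends lab P x =
     {(x \<oplus>\<^sub>s alpha_set lab S) \<inter> Conn ends P | S. S \<subseteq> BP ends lab P}"

text \<open>F is a function determined by Algorithm 1: there is a choice of one
representative per configuration class, F has modulus one on it, and for every
subset of B_P (enumerated in some order p_1..p_m) the assignment of the algorithm holds.\<close>
definition algorithm1_output ::
  "('e::finite \<Rightarrow> 'v set) \<Rightarrow> ('p::finite \<Rightarrow> nat \<Rightarrow> 'e) \<Rightarrow> 'e list \<Rightarrow> ('e set \<Rightarrow> complex) \<Rightarrow> bool" where
  "algorithm1_output ends lab P F \<longleftrightarrow>
    (\<exists>rep. \<forall>x. x \<subseteq> Conn ends P \<longrightarrow>
       rep x \<in> config_class ends lab P x \<and>
       (\<forall>y\<in>config_class ends lab P x. rep y = rep x) \<and>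
       cmod (F (rep x)) = 1 \<and>
       (\<forall>S \<subseteq> BP ends lab P. \<exists>ps. distinct ps \<and> set ps = S \<and>
          F ((rep x \<oplus>\<^sub>s alpha_list lab ps) \<inter> Conn ends P)
            = theta lab P (rep x) ps * F (rep x)))"

text \<open>S^+_P = X_P sum_i F_P(i|Conn) |i><i|.\<close>
definition Splus :: "('e \<Rightarrow> 'v set) \<Rightarrow> 'e list \<Rightarrow> ('e set \<Rightarrow> complex) \<Rightarrow> 'e op" where
  "Splus ends P F = (\<lambda>j i. if j = i \<oplus>\<^sub>s alpha_path P then F (i \<inter> Conn ends P) else 0)"

end

theory Submission
  imports Defs "HOL-Library.Multiset"
begin

lemma xor_assoc: "(a \<oplus>\<^sub>s b) \<oplus>\<^sub>s c = a \<oplus>\<^sub>s (b \<oplus>\<^sub>s c)"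
  by (auto simp: xor_set_def)
lemma xor_comm: "a \<oplus>\<^sub>s b = b \<oplus>\<^sub>s a"
  by (auto simp: xor_set_def)
lemma xor_empty[simp]: "a \<oplus>\<^sub>s {} = a" "{} \<oplus>\<^sub>s a = a"
  by (auto simp: xor_set_def)
lemma xor_self[simp]: "a \<oplus>\<^sub>s a = {}"
  by (auto simp: xor_set_def)
lemma xor_mem: "x \<in> a \<oplus>\<^sub>s b \<longleftrightarrow> (x \<in> a) \<noteq> (x \<in> b)"
  by (auto simp: xor_set_def)

lemma alist_char: "alpha_list lab ps = {e. odd (length (filter (\<lambda>q. e \<in> alpha_p lab q) ps))}"
proof (induction ps)
  case Nil thus ?case by (simp add: alpha_list_def)
next
  case (Cons p ps)
  have "alpha_list lab (p # ps) = alpha_p lab p \<oplus>\<^sub>s alpha_list lab ps" by (simp add: alpha_list_def)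
  thus ?case using Cons.IH by (intro set_eqI) (simp add: xor_mem)
qed

lemma alist_mset: "mset ps = mset qs \<Longrightarrow> alpha_list lab ps = alpha_list lab qs"
proof -
  assume "mset ps = mset qs"
  hence "\<And>P. length (filter P ps) = length (filter P qs)"
    by (simp flip: size_mset)
  thus ?thesis by (simp add: alist_char)
qed

lemma alist_append: "alpha_list lab (us @ vs) = alpha_list lab us \<oplus>\<^sub>s alpha_list lab vs"
  by (induction us) (auto simp: alpha_list_def xor_assoc)

lemma alist_single: "alpha_list lab [p] = alpha_p lab p"
  by (simp add: alpha_list_def)

lemma alist_set: "distinct ps \<Longrightarrow> alpha_list lab ps = alpha_set lab (set ps)"
proof -
  assume d: "distinct ps"
  have "\<And>e. {q. e \<in> alpha_p lab q} \<inter> set ps = {q \<in> set ps. e \<in> alpha_p lab q}" by auto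
  thus ?thesis using d by (simp add: alist_char alpha_set_def distinct_length_filter)
qed

definition Phi :: "('p \<Rightarrow> nat \<Rightarrow> 'e) \<Rightarrow> 'e set \<Rightarrow> 'p list \<Rightarrow> complex" where
  "Phi lab x ps = (\<Prod>k<length ps. bphase lab (ps ! k) (x \<oplus>\<^sub>s alpha_list lab (take k ps)))"

lemma Phi_Nil[simp]: "Phi lab x [] = 1"
  by (simp add: Phi_def)

lemma Phi_Cons: "Phi lab x (p # ps) = bphase lab p x * Phi lab (x \<oplus>\<^sub>s alpha_p lab p) ps"
  unfolding Phi_def
  by (simp add: prod.lessThan_Suc_shift alpha_list_def xor_assoc del: prod.lessThan_Suc)

lemma Phi_append: "Phi lab x (us @ vs) = Phi lab x us * Phi lab (x \<oplus>\<^sub>s alpha_list lab us) vs"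
  by (induction us arbitrary: x) (auto simp: Phi_Cons alpha_list_def xor_assoc)

lemma Phi_snoc: "Phi lab x (us @ [p]) = Phi lab x us * bphase lab p (x \<oplus>\<^sub>s alpha_list lab us)"
  by (simp add: Phi_append Phi_Cons)

lemma op_mult_right:
  assumes "\<And>k i. N k i = (if k = i \<oplus>\<^sub>s D then n i else 0)"
  shows "op_mult M N j i = M j (i \<oplus>\<^sub>s D) * n i"
  unfolding op_mult_def assms by (simp add: if_distrib cong: if_cong)

lemma Bop_form: "Bop lab p k i = (if k = i \<oplus>\<^sub>s alpha_p lab p then bphase lab p i else 0)"
  by (simp add: Bop_def)

lemma Bop_mult: "op_mult (Bop lab a) (Bop lab b) j i =
   (if j = i \<oplus>\<^sub>s alpha_p lab b \<oplus>\<^sub>s alpha_p lab a then bphase lab a (i \<oplus>\<^sub>s alpha_p lab b) else 0) * bphase lab b i"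
  by (subst op_mult_right[OF Bop_form]) (simp add: Bop_def)

lemma comm_phase:
  assumes "B_commuting_involutions lab"
  shows "bphase lab a z * bphase lab b (z \<oplus>\<^sub>s alpha_p lab a) = bphase lab b z * bphase lab a (z \<oplus>\<^sub>s alpha_p lab b)"
proof -
  have "op_mult (Bop lab a) (Bop lab b) (z \<oplus>\<^sub>s alpha_p lab a \<oplus>\<^sub>s alpha_p lab b) z
      = op_mult (Bop lab b) (Bop lab a) (z \<oplus>\<^sub>s alpha_p lab a \<oplus>\<^sub>s alpha_p lab b) z"
    using assms by (simp add: B_commuting_involutions_def)
  thus ?thesis unfolding Bop_mult
    by (simp add: xor_assoc xor_comm[of "alpha_p lab a"] mult.commute)
qed

lemma inv_phase:
  assumes "B_commuting_involutions lab"
  shows "bphase lab p (z \<oplus>\<^sub>s alpha_p lab p) * bphase lab p z = 1"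
proof -
  have "op_mult (Bop lab p) (Bop lab p) z z = op_id z z"
    using assms by (simp add: B_commuting_involutions_def)
  thus ?thesis unfolding Bop_mult by (simp add: xor_assoc op_id_def)
qed

lemma Phi_swap:
  assumes "B_commuting_involutions lab"
  shows "Phi lab x (us @ a # b # vs) = Phi lab x (us @ b # a # vs)"
proof -
  have "Phi lab z (a # b # vs) = Phi lab z (b # a # vs)" for z
    using comm_phase[OF assms, of a z b]
    by (simp add: Phi_Cons xor_assoc xor_comm[of "alpha_p lab a"])
  thus ?thesis by (simp add: Phi_append)
qed

lemma Phi_move:
  assumes "B_commuting_involutions lab"
  shows "Phi lab x (us @ q # vs) = Phi lab x (us @ vs @ [q])"
proof (induction vs arbitrary: us)
  case Nil thus ?case by simp
next
  case (Cons v vs)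
  have "Phi lab x (us @ q # v # vs) = Phi lab x (us @ v # q # vs)" by (rule Phi_swap[OF assms])
  also have "\<dots> = Phi lab x ((us @ [v]) @ q # vs)" by simp
  also have "\<dots> = Phi lab x ((us @ [v]) @ vs @ [q])" by (rule Cons.IH)
  finally show ?case by simp
qed

lemma Phi_mset:
  assumes "B_commuting_involutions lab"
  shows "mset ps = mset qs \<Longrightarrow> Phi lab x ps = Phi lab x qs"
proof (induction qs arbitrary: ps rule: rev_induct)
  case Nil thus ?case by simp
next
  case (snoc q qs)
  have "q \<in># mset ps" using snoc.prems by simp
  hence "q \<in> set ps" by simp
  then obtain us vs where ps: "ps = us @ q # vs" by (metis split_list)
  have "add_mset q (mset (us @ vs)) = add_mset q (mset qs)" using snoc.prems ps by simp
  hence m: "mset (us @ vs) = mset qs" by simp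
  have "Phi lab x ps = Phi lab x ((us @ vs) @ [q])" using Phi_move[OF assms, of x us q vs] ps by simp
  also have "\<dots> = Phi lab x qs * bphase lab q (x \<oplus>\<^sub>s alpha_list lab qs)"
    unfolding Phi_snoc snoc.IH[OF m] alist_mset[OF m] ..
  finally show ?case by (simp add: Phi_snoc)
qed

lemma Phi_toggle:
  assumes "B_commuting_involutions lab"
    and "distinct ps" "distinct qs" "set qs = (set ps - {p}) \<union> ({p} - set ps)"
  shows "Phi lab x qs = bphase lab p (x \<oplus>\<^sub>s alpha_list lab ps) * Phi lab x ps
       \<and> alpha_list lab qs = alpha_list lab ps \<oplus>\<^sub>s alpha_p lab p"
proof (cases "p \<in> set ps")
  case False
  have d1: "distinct (ps @ [p])" using False assms(2) by simp
  have s1: "set qs = set (ps @ [p])" using False assms(4) by auto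
  have m: "mset qs = mset (ps @ [p])"
    using set_eq_iff_mset_eq_distinct[OF assms(3) d1] s1 by simp
  show ?thesis
    using Phi_mset[OF assms(1) m, of x] alist_mset[OF m, of lab]
    by (simp add: Phi_snoc alist_append alist_single)
next
  case True
  have d1: "distinct (qs @ [p])" using True assms(3,4) by auto
  have s1: "set ps = set (qs @ [p])" using True assms(4) by auto
  have m: "mset ps = mset (qs @ [p])"
    using set_eq_iff_mset_eq_distinct[OF assms(2) d1] s1 by simp
  have a: "alpha_list lab ps = alpha_list lab qs \<oplus>\<^sub>s alpha_p lab p"
    using alist_mset[OF m, of lab] by (simp add: alist_append alist_single)
  have c1: "Phi lab x ps = Phi lab x qs * bphase lab p (x \<oplus>\<^sub>s alpha_list lab qs)"
    using Phi_mset[OF assms(1) m, of x] by (simp add: Phi_snoc)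
  have c2: "bphase lab p (x \<oplus>\<^sub>s alpha_list lab ps) * bphase lab p (x \<oplus>\<^sub>s alpha_list lab qs) = 1"
    using inv_phase[OF assms(1), of p "x \<oplus>\<^sub>s alpha_list lab qs"] by (simp add: a xor_assoc)
  have "bphase lab p (x \<oplus>\<^sub>s alpha_list lab ps) * Phi lab x ps
      = (bphase lab p (x \<oplus>\<^sub>s alpha_list lab ps) * bphase lab p (x \<oplus>\<^sub>s alpha_list lab qs)) * Phi lab x qs"
    unfolding c1 by (simp only: mult_ac)
  also have "\<dots> = Phi lab x qs" unfolding c2 by simp
  finally have e1: "Phi lab x qs = bphase lab p (x \<oplus>\<^sub>s alpha_list lab ps) * Phi lab x ps" by simp
  have e2: "alpha_list lab qs = alpha_list lab ps \<oplus>\<^sub>s alpha_p lab p"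
    unfolding a xor_assoc by simp
  show ?thesis using e1 e2 by blast
qed

lemma alpha_path_sub: "alpha_path P \<subseteq> Conn ends P"
proof
  fix e assume "e \<in> alpha_path P"
  hence "odd (count_list P e)" by (simp add: alpha_path_def)
  hence "e \<in> set P" by (metis count_list_0_iff even_zero)
  thus "e \<in> Conn ends P" by (simp add: Conn_def)
qed

lemma tri:
  assumes "v \<in> ends a" "v \<in> ends b" "v \<in> ends c"
  shows "{a,b,c} \<subseteq> Conn ends P \<or> {a,b,c} \<inter> alpha_path P = {}"
proof (rule ccontr)
  assume n: "\<not> ({a,b,c} \<subseteq> Conn ends P \<or> {a,b,c} \<inter> alpha_path P = {})"
  then obtain f where f: "f \<in> {a,b,c}" "f \<in> alpha_path P" by auto
  hence "odd (count_list P f)" by (simp add: alpha_path_def)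
  hence fP: "f \<in> set P" by (metis count_list_0_iff even_zero)
  have "v \<in> ends f" using f assms by auto
  hence "{a,b,c} \<subseteq> Conn ends P" using fP assms unfolding Conn_def by blast
  thus False using n by blast
qed

lemma nm_np_cong: "e \<in> E \<Longrightarrow> u \<inter> E = w \<inter> E \<Longrightarrow> nm u e = nm w e \<and> np u e = np w e"
proof -
  assume "e \<in> E" "u \<inter> E = w \<inter> E"
  hence "e \<in> u \<longleftrightarrow> e \<in> w" by blast
  thus ?thesis unfolding nm_def np_def by simp
qed

lemma fac3:
  fixes \<Phi> :: "int \<Rightarrow> int \<Rightarrow> int \<Rightarrow> int \<Rightarrow> int \<Rightarrow> int \<Rightarrow> complex"
  assumes nz: "\<And>m1 q1 m2 q2 m3 q3. \<Phi> m1 q1 m2 q2 m3 q3 \<noteq> 0"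
    and v: "v \<in> ends a" "v \<in> ends b" "v \<in> ends c"
    and yz: "y \<inter> Conn ends P = z \<inter> Conn ends P"
  defines "g \<equiv> (\<lambda>x. \<Phi> (nm x a) (np x a) (nm x b) (np x b) (nm x c) (np x c))"
  shows "g (y \<oplus>\<^sub>s alpha_path P) / g y = g (z \<oplus>\<^sub>s alpha_path P) / g z"
proof -
  let ?E = "{a,b,c}"
  have dep: "g u = g w" if "u \<inter> ?E = w \<inter> ?E" for u w
    using nm_np_cong[OF _ that, of a] nm_np_cong[OF _ that, of b] nm_np_cong[OF _ that, of c]
    unfolding g_def by simp
  have gnz: "g u \<noteq> 0" for u unfolding g_def by (rule nz)
  have AC: "alpha_path P \<subseteq> Conn ends P" by (rule alpha_path_sub)
  from tri[of v ends a b c P, OF v] show ?thesis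
  proof
    assume EC: "?E \<subseteq> Conn ends P"
    have "y \<inter> ?E = z \<inter> ?E" using yz EC by blast
    moreover have "(y \<oplus>\<^sub>s alpha_path P) \<inter> ?E = (z \<oplus>\<^sub>s alpha_path P) \<inter> ?E"
      using yz EC unfolding xor_set_def by blast
    ultimately show ?thesis using dep by metis
  next
    assume "?E \<inter> alpha_path P = {}"
    hence "(u \<oplus>\<^sub>s alpha_path P) \<inter> ?E = u \<inter> ?E" for u unfolding xor_set_def by blast
    hence "g (u \<oplus>\<^sub>s alpha_path P) = g u" for u using dep by metis
    thus ?thesis using gnz by simp
  qed
qed

lemma hv:
  assumes "honeycomb ends lab" "j \<in> {1..6::nat}"
  shows "\<exists>v. v \<in> ends (lab p j) \<and> v \<in> ends (lab p (j mod 6 + 1)) \<and> v \<in> ends (lab p (6 + j))"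
  using assms unfolding honeycomb_def by blast

lemma rat7: "((H'::complex) * a' * b' * c' * d' * e' * f') / (H * a * b * c * d * e * f)
   = (H'/H) * (a'/a) * (b'/b) * (c'/c) * (d'/d) * (e'/e) * (f'/f)"
  by (simp add: times_divide_times_eq)

lemma ratio_conn:
  fixes lab :: "'p::finite \<Rightarrow> nat \<Rightarrow> 'e::finite" and ends :: "'e \<Rightarrow> 'v::finite set"
  assumes hc: "honeycomb ends lab" and yz: "y \<inter> Conn ends P = z \<inter> Conn ends P"
  shows "bphase lab p (y \<oplus>\<^sub>s alpha_path P) / bphase lab p y
       = bphase lab p (z \<oplus>\<^sub>s alpha_path P) / bphase lab p z"
proof -
  define a where "a j = lab p (if j = 1 then 6 else j - 1)" for j
  define h where "h = (\<lambda>(ma::int) (qa::int) (mb::int) (qb::int) (mc::int) (qc::int). (-1::complex) ^ nat (ma * qb))"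
  define k12 where "k12 = (\<lambda>(m12::int) (q12::int) (m1::int) (q1::int) (m6::int) (q6::int). \<i> powi (m12 * (m1 * m6 - q1 * q6)))"
  define k7 where "k7 = (\<lambda>(m7::int) (q7::int) (m1::int) (q1::int) (m2::int) (q2::int). \<i> powi (m7 * (q1 * q2 - m1 * m2)))"
  define k8 where "k8 = (\<lambda>(m8::int) (q8::int) (m2::int) (q2::int) (m3::int) (q3::int). \<i> powi (q8 * (m2 * q3 - q2 * m3)))"
  define k9 where "k9 = (\<lambda>(m9::int) (q9::int) (m3::int) (q3::int) (m4::int) (q4::int). \<i> powi (m9 * (m3 * m4 - q3 * q4)))"
  define k10 where "k10 = (\<lambda>(m10::int) (q10::int) (m4::int) (q4::int) (m5::int) (q5::int). \<i> powi (m10 * (q4 * q5 - m4 * m5)))"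
  define k11 where "k11 = (\<lambda>(m11::int) (q11::int) (m5::int) (q5::int) (m6::int) (q6::int). \<i> powi (q11 * (m5 * q6 - q5 * m6)))"
  define G where "G (\<Phi>::int\<Rightarrow>int\<Rightarrow>int\<Rightarrow>int\<Rightarrow>int\<Rightarrow>int\<Rightarrow>complex) (e1::'e) (e2::'e) (e3::'e) (x::'e set) = (\<Phi> (nm x e1) (np x e1) (nm x e2) (np x e2) (nm x e3) (np x e3) :: complex)" for \<Phi> e1 e2 e3 x
  have split: "bphase lab p x = (\<Prod>j\<in>{1..6}. G h (a j) (lab p j) (lab p j) x)
     * G k12 (lab p 12) (lab p 1) (lab p 6) x * G k7 (lab p 7) (lab p 1) (lab p 2) x
     * G k8 (lab p 8) (lab p 2) (lab p 3) x * G k9 (lab p 9) (lab p 3) (lab p 4) x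
     * G k10 (lab p 10) (lab p 4) (lab p 5) x * G k11 (lab p 11) (lab p 5) (lab p 6) x" for x
    by (simp add: bphase_def Let_def G_def h_def k12_def k7_def k8_def k9_def k10_def k11_def a_def)
  have F: "G \<Phi> ea eb ec (y \<oplus>\<^sub>s alpha_path P) / G \<Phi> ea eb ec y = G \<Phi> ea eb ec (z \<oplus>\<^sub>s alpha_path P) / G \<Phi> ea eb ec z"
    if "\<And>m1 q1 m2 q2 m3 q3. \<Phi> m1 q1 m2 q2 m3 q3 \<noteq> 0" "v \<in> ends ea" "v \<in> ends eb" "v \<in> ends ec"
    for \<Phi> ea eb ec v
    unfolding G_def by (rule fac3[OF that yz])
  have nzh: "\<And>m1 q1 m2 q2 m3 q3. h m1 q1 m2 q2 m3 q3 \<noteq> 0" by (simp add: h_def)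
  have nzk: "\<And>m1 q1 m2 q2 m3 q3. k12 m1 q1 m2 q2 m3 q3 \<noteq> 0"
    "\<And>m1 q1 m2 q2 m3 q3. k7 m1 q1 m2 q2 m3 q3 \<noteq> 0"
    "\<And>m1 q1 m2 q2 m3 q3. k8 m1 q1 m2 q2 m3 q3 \<noteq> 0"
    "\<And>m1 q1 m2 q2 m3 q3. k9 m1 q1 m2 q2 m3 q3 \<noteq> 0"
    "\<And>m1 q1 m2 q2 m3 q3. k10 m1 q1 m2 q2 m3 q3 \<noteq> 0"
    "\<And>m1 q1 m2 q2 m3 q3. k11 m1 q1 m2 q2 m3 q3 \<noteq> 0"
    by (auto simp: k12_def k7_def k8_def k9_def k10_def k11_def)
  have V: "\<exists>v. v \<in> ends (lab p j) \<and> v \<in> ends (lab p (j mod 6 + 1)) \<and> v \<in> ends (lab p (6 + j))"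
    if "j \<in> {1..6}" for j using hv[OF hc that] .
  have "(1::nat) \<in> {1..6}" by simp
  note Vj = V[OF this]
  have "(1::nat) mod 6 + 1 = 2" "(6::nat) + 1 = 7" by simp_all
  from Vj[unfolded this] obtain v1 where v1: "v1 \<in> ends (lab p 1)" "v1 \<in> ends (lab p 2)" "v1 \<in> ends (lab p 7)" by blast
  have "(2::nat) \<in> {1..6}" by simp
  note Vj = V[OF this]
  have "(2::nat) mod 6 + 1 = 3" "(6::nat) + 2 = 8" by simp_all
  from Vj[unfolded this] obtain v2 where v2: "v2 \<in> ends (lab p 2)" "v2 \<in> ends (lab p 3)" "v2 \<in> ends (lab p 8)" by blast
  have "(3::nat) \<in> {1..6}" by simp
  note Vj = V[OF this]
  have "(3::nat) mod 6 + 1 = 4" "(6::nat) + 3 = 9" by simp_all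
  from Vj[unfolded this] obtain v3 where v3: "v3 \<in> ends (lab p 3)" "v3 \<in> ends (lab p 4)" "v3 \<in> ends (lab p 9)" by blast
  have "(4::nat) \<in> {1..6}" by simp
  note Vj = V[OF this]
  have "(4::nat) mod 6 + 1 = 5" "(6::nat) + 4 = 10" by simp_all
  from Vj[unfolded this] obtain v4 where v4: "v4 \<in> ends (lab p 4)" "v4 \<in> ends (lab p 5)" "v4 \<in> ends (lab p 10)" by blast
  have "(5::nat) \<in> {1..6}" by simp
  note Vj = V[OF this]
  have "(5::nat) mod 6 + 1 = 6" "(6::nat) + 5 = 11" by simp_all
  from Vj[unfolded this] obtain v5 where v5: "v5 \<in> ends (lab p 5)" "v5 \<in> ends (lab p 6)" "v5 \<in> ends (lab p 11)" by blast
  have "(6::nat) \<in> {1..6}" by simp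
  note Vj = V[OF this]
  have "(6::nat) mod 6 + 1 = 1" "(6::nat) + 6 = 12" by simp_all
  from Vj[unfolded this] obtain v6 where v6: "v6 \<in> ends (lab p 6)" "v6 \<in> ends (lab p 1)" "v6 \<in> ends (lab p 12)" by blast
  have Hj: "G h (a j) (lab p j) (lab p j) (y \<oplus>\<^sub>s alpha_path P) / G h (a j) (lab p j) (lab p j) y
     = G h (a j) (lab p j) (lab p j) (z \<oplus>\<^sub>s alpha_path P) / G h (a j) (lab p j) (lab p j) z"
    if j: "j \<in> {1..6}" for j
  proof -
    define j' where "j' = (if j = 1 then 6 else j - 1)"
    have j'1: "j' \<in> {1..6}" and j'2: "j' mod 6 + 1 = j" using j by (auto simp: j'_def)
    obtain v where "v \<in> ends (lab p j')" "v \<in> ends (lab p j)"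
      using V[OF j'1] j'2 by auto
    thus ?thesis using F[OF nzh, of v "a j" "lab p j" "lab p j"] by (simp add: a_def j'_def)
  qed
  have PR: "(\<Prod>j\<in>{1..6}. G h (a j) (lab p j) (lab p j) (y \<oplus>\<^sub>s alpha_path P) / G h (a j) (lab p j) (lab p j) y)
     = (\<Prod>j\<in>{1..6}. G h (a j) (lab p j) (lab p j) (z \<oplus>\<^sub>s alpha_path P) / G h (a j) (lab p j) (lab p j) z)"
    by (rule prod.cong[OF refl]) (rule Hj)
  note f12 = F[where \<Phi>=k12 and ea="lab p 12" and eb="lab p 1" and ec="lab p 6" and v=v6, OF nzk(1) v6(3) v6(2) v6(1)]
  note f7 = F[where \<Phi>=k7 and ea="lab p 7" and eb="lab p 1" and ec="lab p 2" and v=v1, OF nzk(2) v1(3) v1(1) v1(2)]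
  note f8 = F[where \<Phi>=k8 and ea="lab p 8" and eb="lab p 2" and ec="lab p 3" and v=v2, OF nzk(3) v2(3) v2(1) v2(2)]
  note f9 = F[where \<Phi>=k9 and ea="lab p 9" and eb="lab p 3" and ec="lab p 4" and v=v3, OF nzk(4) v3(3) v3(1) v3(2)]
  note f10 = F[where \<Phi>=k10 and ea="lab p 10" and eb="lab p 4" and ec="lab p 5" and v=v4, OF nzk(5) v4(3) v4(1) v4(2)]
  note f11 = F[where \<Phi>=k11 and ea="lab p 11" and eb="lab p 5" and ec="lab p 6" and v=v5, OF nzk(6) v5(3) v5(1) v5(2)]
  show ?thesis
    unfolding split rat7 prod_dividef[symmetric] PR f12 f7 f8 f9 f10 f11 by (rule refl)
qed

lemma bphase_nz: "bphase lab p x \<noteq> 0"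
  by (simp add: bphase_def Let_def)

lemma bphase_dep:
  assumes "x \<inter> lab p ` {1..12} = w \<inter> lab p ` {1..12}"
  shows "bphase lab p x = bphase lab p w"
proof -
  have e: "nm x (lab p j) = nm w (lab p j)" "np x (lab p j) = np w (lab p j)" if "j \<in> {1..12}" for j
    using nm_np_cong[OF _ assms, of "lab p j"] that by auto
  have pr: "(\<Prod>j\<in>{1..6::nat}. (-1::complex) ^ nat (nm x (lab p (if j = 1 then 6 else j - 1)) * np x (lab p j)))
    = (\<Prod>j\<in>{1..6::nat}. (-1::complex) ^ nat (nm w (lab p (if j = 1 then 6 else j - 1)) * np w (lab p j)))"
  proof (rule prod.cong[OF refl])
    fix j :: nat assume j: "j \<in> {1..6}"
    have i1: "(if j = 1 then 6 else j - 1) \<in> {1..12::nat}" and i2: "j \<in> {1..12}" using j by auto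
    show "(-1::complex) ^ nat (nm x (lab p (if j = 1 then 6 else j - 1)) * np x (lab p j))
       = (-1::complex) ^ nat (nm w (lab p (if j = 1 then 6 else j - 1)) * np w (lab p j))"
      using e[OF i1] e[OF i2] by simp
  qed
  show ?thesis unfolding bphase_def Let_def pr by (simp add: e)
qed

lemma out_phase:
  assumes hc: "honeycomb ends lab" and p: "p \<notin> BP ends lab P"
  shows "bphase lab p (y \<oplus>\<^sub>s alpha_path P) = bphase lab p y"
proof -
  have disj: "alpha_p lab p \<inter> Conn ends P = {}" using p by (simp add: BP_def)
  have AC: "alpha_path P \<subseteq> Conn ends P" by (rule alpha_path_sub)
  have nA: "lab p j \<notin> alpha_path P" if j: "j \<in> {1..12}" for j
  proof
    assume jA: "lab p j \<in> alpha_path P"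
    show False
    proof (cases "j \<le> 6")
      case True
      have "j \<in> {1..6}" using j True by simp
      hence "lab p j \<in> alpha_p lab p" unfolding alpha_p_def by (rule imageI)
      thus False using jA AC disj by blast
    next
      case False
      define j0 where "j0 = j - 6"
      have j01: "6 + j0 = j" using False by (simp add: j0_def)
      have j02: "j0 \<in> {1..6}" using j False unfolding j0_def by auto
      obtain v where v: "v \<in> ends (lab p j0)" "v \<in> ends (lab p j)"
        using hv[OF hc j02, of p] unfolding j01 by blast
      have "{lab p j, lab p j0, lab p j0} \<subseteq> Conn ends P \<or> {lab p j, lab p j0, lab p j0} \<inter> alpha_path P = {}"
        by (rule tri[of v ends "lab p j" "lab p j0" "lab p j0" P, OF v(2) v(1) v(1)])
      hence "lab p j0 \<in> Conn ends P" using jA by blast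
      moreover have "lab p j0 \<in> alpha_p lab p" unfolding alpha_p_def using j02 by (rule imageI)
      ultimately show False using disj by blast
    qed
  qed
  have "(y \<oplus>\<^sub>s alpha_path P) \<inter> lab p ` {1..12} = y \<inter> lab p ` {1..12}"
  proof (rule set_eqI)
    fix e
    show "e \<in> (y \<oplus>\<^sub>s alpha_path P) \<inter> lab p ` {1..12} \<longleftrightarrow> e \<in> y \<inter> lab p ` {1..12}"
    proof (cases "e \<in> lab p ` {1..12}")
      case True
      then obtain j where "j \<in> {1..12}" "e = lab p j" by blast
      hence "e \<notin> alpha_path P" using nA by simp
      thus ?thesis by (simp add: xor_mem)
    next
      case False thus ?thesis by simp
    qed
  qed
  thus ?thesis by (rule bphase_dep)
qed

lemma theta_Phi: "theta lab P x ps = Phi lab (x \<oplus>\<^sub>s alpha_path P) ps / Phi lab x ps"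
  unfolding theta_def Phi_def by (rule prod_dividef)

theorem lemma4:
  fixes ends :: "'e::finite \<Rightarrow> 'v::finite set"
    and lab :: "'p::finite \<Rightarrow> nat \<Rightarrow> 'e"
    and P :: "'e list"
    and F :: "'e set \<Rightarrow> complex"
  assumes "honeycomb ends lab"
    and "B_commuting_involutions lab"
    and "is_walk ends P"
    and "algorithm1_output ends lab P F"
  shows "(\<forall>x p. x \<subseteq> Conn ends P \<longrightarrow> p \<in> BP ends lab P \<longrightarrow>
            F ((x \<oplus>\<^sub>s alpha_p lab p) \<inter> Conn ends P)
              = bphase lab p (x \<oplus>\<^sub>s alpha_path P) / bphase lab p x * F x)
       \<and> (\<forall>p. op_mult (Splus ends P F) (Bop lab p) = op_mult (Bop lab p) (Splus ends P F))"
proof -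
  let ?C = "Conn ends P" and ?A = "alpha_path P"
  from assms(4) obtain rep where R: "\<And>x. x \<subseteq> ?C \<Longrightarrow>
       rep x \<in> config_class ends lab P x \<and>
       (\<forall>y\<in>config_class ends lab P x. rep y = rep x) \<and>
       cmod (F (rep x)) = 1 \<and>
       (\<forall>S \<subseteq> BP ends lab P. \<exists>ps. distinct ps \<and> set ps = S \<and>
          F ((rep x \<oplus>\<^sub>s alpha_list lab ps) \<inter> ?C)
            = theta lab P (rep x) ps * F (rep x))"
    unfolding algorithm1_output_def by blast
  have part1: "\<forall>x p. x \<subseteq> ?C \<longrightarrow> p \<in> BP ends lab P \<longrightarrow>
            F ((x \<oplus>\<^sub>s alpha_p lab p) \<inter> ?C)
              = bphase lab p (x \<oplus>\<^sub>s ?A) / bphase lab p x * F x"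
  proof (intro allI impI)
    fix x p assume x: "x \<subseteq> ?C" and p: "p \<in> BP ends lab P"
    define r where "r = rep x"
    have R1: "r \<in> config_class ends lab P x" using R[OF x] unfolding r_def by blast
    have R4: "\<forall>S \<subseteq> BP ends lab P. \<exists>ps. distinct ps \<and> set ps = S \<and>
          F ((r \<oplus>\<^sub>s alpha_list lab ps) \<inter> ?C) = theta lab P r ps * F r"
      using R[OF x] unfolding r_def by blast
    from R1 obtain S0 where S0: "S0 \<subseteq> BP ends lab P" "r = (x \<oplus>\<^sub>s alpha_set lab S0) \<inter> ?C"
      unfolding config_class_def by blast
    from R4 S0(1) obtain ps where ps: "distinct ps" "set ps = S0"
      "F ((r \<oplus>\<^sub>s alpha_list lab ps) \<inter> ?C) = theta lab P r ps * F r" by blast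
    have S1: "(S0 - {p}) \<union> ({p} - S0) \<subseteq> BP ends lab P" using S0(1) p by blast
    from R4 S1 obtain qs where qs: "distinct qs" "set qs = (S0 - {p}) \<union> ({p} - S0)"
      "F ((r \<oplus>\<^sub>s alpha_list lab qs) \<inter> ?C) = theta lab P r qs * F r" by blast
    define a where "a = alpha_list lab ps"
    have a0: "a = alpha_set lab S0" unfolding a_def using alist_set[OF ps(1)] ps(2) by simp
    have xr: "(r \<oplus>\<^sub>s a) \<inter> ?C = x" using S0(2) a0 x unfolding xor_set_def by blast
    have sq: "set qs = (set ps - {p}) \<union> ({p} - set ps)" using qs(2) ps(2) by simp
    note T = Phi_toggle[OF assms(2) ps(1) qs(1) sq]
    have T2: "alpha_list lab qs = a \<oplus>\<^sub>s alpha_p lab p" using T[of r] unfolding a_def by blast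
    have T1: "Phi lab r qs = bphase lab p (r \<oplus>\<^sub>s a) * Phi lab r ps" using T[of r] unfolding a_def by blast
    have T1': "Phi lab (r \<oplus>\<^sub>s ?A) qs = bphase lab p (r \<oplus>\<^sub>s ?A \<oplus>\<^sub>s a) * Phi lab (r \<oplus>\<^sub>s ?A) ps"
      using T[of "r \<oplus>\<^sub>s ?A"] unfolding a_def by blast
    have "(r \<oplus>\<^sub>s alpha_list lab qs) \<inter> ?C = ((r \<oplus>\<^sub>s a) \<inter> ?C \<oplus>\<^sub>s alpha_p lab p) \<inter> ?C"
      unfolding T2 xor_set_def by blast
    hence xq: "(r \<oplus>\<^sub>s alpha_list lab qs) \<inter> ?C = (x \<oplus>\<^sub>s alpha_p lab p) \<inter> ?C" unfolding xr .
    have xF: "F x = theta lab P r ps * F r" using ps(3) unfolding a_def[symmetric] xr .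
    have e1: "r \<oplus>\<^sub>s ?A \<oplus>\<^sub>s a = (r \<oplus>\<^sub>s a) \<oplus>\<^sub>s ?A" by (simp add: xor_assoc xor_comm[of ?A])
    have rc: "bphase lab p ((r \<oplus>\<^sub>s a) \<oplus>\<^sub>s ?A) / bphase lab p (r \<oplus>\<^sub>s a)
        = bphase lab p (x \<oplus>\<^sub>s ?A) / bphase lab p x"
      by (rule ratio_conn[OF assms(1)]) (use xr x in blast)
    have "F ((x \<oplus>\<^sub>s alpha_p lab p) \<inter> ?C) = theta lab P r qs * F r" using qs(3) unfolding xq .
    also have "theta lab P r qs = (bphase lab p ((r \<oplus>\<^sub>s a) \<oplus>\<^sub>s ?A) / bphase lab p (r \<oplus>\<^sub>s a)) * theta lab P r ps"
      unfolding theta_Phi T1 T1' e1 by (rule times_divide_times_eq[symmetric])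
    finally show "F ((x \<oplus>\<^sub>s alpha_p lab p) \<inter> ?C) = bphase lab p (x \<oplus>\<^sub>s ?A) / bphase lab p x * F x"
      unfolding rc xF by (simp only: mult.assoc)
  qed
  have part2: "op_mult (Splus ends P F) (Bop lab p) = op_mult (Bop lab p) (Splus ends P F)" for p
  proof (intro ext)
    fix j i
    have L: "op_mult (Splus ends P F) (Bop lab p) j i = Splus ends P F j (i \<oplus>\<^sub>s alpha_p lab p) * bphase lab p i"
      by (rule op_mult_right[OF Bop_form])
    have Rr: "op_mult (Bop lab p) (Splus ends P F) j i = Bop lab p j (i \<oplus>\<^sub>s ?A) * F (i \<inter> ?C)"
      by (rule op_mult_right) (simp add: Splus_def)
    have cnd: "i \<oplus>\<^sub>s alpha_p lab p \<oplus>\<^sub>s ?A = i \<oplus>\<^sub>s ?A \<oplus>\<^sub>s alpha_p lab p"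
      by (simp add: xor_assoc xor_comm[of ?A])
    have key: "F ((i \<oplus>\<^sub>s alpha_p lab p) \<inter> ?C) * bphase lab p i = bphase lab p (i \<oplus>\<^sub>s ?A) * F (i \<inter> ?C)"
    proof (cases "p \<in> BP ends lab P")
      case True
      have s1: "((i \<inter> ?C) \<oplus>\<^sub>s alpha_p lab p) \<inter> ?C = (i \<oplus>\<^sub>s alpha_p lab p) \<inter> ?C"
        unfolding xor_set_def by blast
      have f: "F ((i \<oplus>\<^sub>s alpha_p lab p) \<inter> ?C)
          = bphase lab p ((i \<inter> ?C) \<oplus>\<^sub>s ?A) / bphase lab p (i \<inter> ?C) * F (i \<inter> ?C)"
        using part1 True unfolding s1[symmetric] by blast
      have rc: "bphase lab p ((i \<inter> ?C) \<oplus>\<^sub>s ?A) / bphase lab p (i \<inter> ?C)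
          = bphase lab p (i \<oplus>\<^sub>s ?A) / bphase lab p i"
        by (rule ratio_conn[OF assms(1)]) blast
      show ?thesis unfolding f rc using bphase_nz[of lab p i] by (simp add: field_simps)
    next
      case False
      have "alpha_p lab p \<inter> ?C = {}" using False by (simp add: BP_def)
      hence s1: "(i \<oplus>\<^sub>s alpha_p lab p) \<inter> ?C = i \<inter> ?C" unfolding xor_set_def by blast
      show ?thesis unfolding s1 out_phase[OF assms(1) False] by simp
    qed
    show "op_mult (Splus ends P F) (Bop lab p) j i = op_mult (Bop lab p) (Splus ends P F) j i"
      unfolding L Rr using key cnd by (simp add: Splus_def Bop_def)
  qed
  show ?thesis using part1 part2 by blast
qed
end
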